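(* Let $Z\subseteq\{0,1\}^n$. For $\bm\alpha\in\mathbb R^n$ let $$C(\bm\alpha)=\Big\{(\bm x,\bm z)\in\mathbb R^n\times\operatorname{conv}(Z):\ \sum_{i=1}^n|\alpha_ix_i|\le\sqrt{\textstyle\sum_{i=1}^n\alpha_i^2z_i}\Big\},\qquad \bar C=\bigcap_{\bm\alpha\in\mathbb R^n}C(\bm\alpha).$$ Then $\bar C=R_{\mathrm{persp}}$, where $$R_{\mathrm{persp}}=\Big\{(\bm x,\bm z)\in\mathbb R^n\times\operatorname{conv}(Z):\ \sum_{i=1}^n\frac{x_i^2}{z_i}\le1\Big\}.$$
   Context: Division convention: $a/b=0$ if $a=b=0$, and $a/b=+\infty$ if $b=0$ and $a\neq0$ (so $x_i^2/z_i=+\infty$ when $z_i=0\ne x_i$). $\operatorname{conv}$ denotes the convex hull. *)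

theory Defs
  imports "HOL-Analysis.Analysis" "HOL-Library.Extended_Real"
begin

definition pdiv :: "real \<Rightarrow> real \<Rightarrow> ereal" where
  "pdiv a b = (if b = 0 then (if a = 0 then 0 else PInfty) else ereal (a / b))"

definition C_alpha :: "(real^'n) set \<Rightarrow> real^'n \<Rightarrow> ((real^'n) \<times> (real^'n)) set" where
  "C_alpha Z \<alpha> = {(x, z). z \<in> convex hull Z \<and>
      (\<Sum>i\<in>UNIV. \<bar>\<alpha>$i * x$i\<bar>) \<le> sqrt (\<Sum>i\<in>UNIV. (\<alpha>$i)\<^sup>2 * z$i)}"

definition C_bar :: "(real^'n) set \<Rightarrow> ((real^'n) \<times> (real^'n)) set" where
  "C_bar Z = (\<Inter>\<alpha>\<in>UNIV. C_alpha Z \<alpha>)"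

definition R_persp :: "(real^'n) set \<Rightarrow> ((real^'n) \<times> (real^'n)) set" where
  "R_persp Z = {(x, z). z \<in> convex hull Z \<and>
      (\<Sum>i\<in>UNIV. pdiv ((x$i)\<^sup>2) (z$i)) \<le> 1}"

end

theory Submission
  imports Defs
begin

lemma hull_nonneg:
  assumes "\<forall>z\<in>Z. \<forall>i. z$i \<in> {0, 1}" and "(z::real^'n) \<in> convex hull Z"
  shows "z$i \<ge> 0"
proof -
  have c: "convex {z::real^'n. \<forall>i. 0 \<le> z$i}"
    unfolding convex_def by (auto intro!: add_nonneg_nonneg mult_nonneg_nonneg)
  have "Z \<subseteq> {z::real^'n. \<forall>i. 0 \<le> z$i}"
  proof
    fix z assume "z \<in> Z"
    then have "\<forall>i. z$i \<in> {0,1}" using assms(1) by blast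
    have "0 \<le> z$i" for i
    proof -
      from \<open>\<forall>i. z$i \<in> {0,1}\<close> have "z$i = 0 \<or> z$i = 1" by simp
      then show ?thesis by auto
    qed
    then show "z \<in> {z::real^'n. \<forall>i. 0 \<le> z$i}" by simp
  qed
  then have "convex hull Z \<subseteq> {z::real^'n. \<forall>i. 0 \<le> z$i}"
    using c by (simp add: hull_minimal)
  then show ?thesis using assms(2) by auto
qed

lemma pdiv_nonneg: "b \<ge> 0 \<Longrightarrow> pdiv (a\<^sup>2) b \<ge> 0"
  unfolding pdiv_def by auto

lemma pdiv_sum_iff:
  fixes x z :: "real^'n"
  assumes nn: "\<And>i. z$i \<ge> 0"
  shows "(\<Sum>i\<in>UNIV. pdiv ((x$i)\<^sup>2) (z$i)) \<le> 1 \<longleftrightarrow>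
     (\<forall>i. z$i = 0 \<longrightarrow> x$i = 0) \<and> (\<Sum>i\<in>UNIV. (x$i)\<^sup>2 / z$i) \<le> 1"
proof
  assume H: "(\<Sum>i\<in>UNIV. pdiv ((x$i)\<^sup>2) (z$i)) \<le> 1"
  have A: "\<forall>i. z$i = 0 \<longrightarrow> x$i = 0"
  proof (intro allI impI, rule ccontr)
    fix i assume "z$i = 0" "x$i \<noteq> 0"
    then have "pdiv ((x$i)\<^sup>2) (z$i) = PInfty" unfolding pdiv_def by auto
    moreover have "(\<Sum>i\<in>UNIV. pdiv ((x$i)\<^sup>2) (z$i)) = pdiv ((x$i)\<^sup>2) (z$i) + (\<Sum>j\<in>UNIV-{i}. pdiv ((x$j)\<^sup>2) (z$j))"
      by (simp add: sum.remove)
    moreover have "(\<Sum>j\<in>UNIV-{i}. pdiv ((x$j)\<^sup>2) (z$j)) \<ge> 0"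
      by (rule sum_nonneg) (auto intro!: pdiv_nonneg nn)
    ultimately have "(\<Sum>i\<in>UNIV. pdiv ((x$i)\<^sup>2) (z$i)) = PInfty" by simp
    then show False using H by simp
  qed
  then have "\<And>i. pdiv ((x$i)\<^sup>2) (z$i) = ereal ((x$i)\<^sup>2 / z$i)"
    unfolding pdiv_def by auto
  then have "(\<Sum>i\<in>UNIV. pdiv ((x$i)\<^sup>2) (z$i)) = ereal (\<Sum>i\<in>UNIV. (x$i)\<^sup>2 / z$i)"
    by (simp add: sum_ereal)
  with H A show "(\<forall>i. z$i = 0 \<longrightarrow> x$i = 0) \<and> (\<Sum>i\<in>UNIV. (x$i)\<^sup>2 / z$i) \<le> 1" by simp
next
  assume H: "(\<forall>i. z$i = 0 \<longrightarrow> x$i = 0) \<and> (\<Sum>i\<in>UNIV. (x$i)\<^sup>2 / z$i) \<le> 1"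
  then have "\<And>i. pdiv ((x$i)\<^sup>2) (z$i) = ereal ((x$i)\<^sup>2 / z$i)"
    unfolding pdiv_def by auto
  then have "(\<Sum>i\<in>UNIV. pdiv ((x$i)\<^sup>2) (z$i)) = ereal (\<Sum>i\<in>UNIV. (x$i)\<^sup>2 / z$i)"
    by (simp add: sum_ereal)
  with H show "(\<Sum>i\<in>UNIV. pdiv ((x$i)\<^sup>2) (z$i)) \<le> 1" by simp
qed

lemma sub1:
  fixes x z \<alpha> :: "real^'n"
  assumes nn: "\<And>i. z$i \<ge> 0" and A: "\<forall>i. z$i = 0 \<longrightarrow> x$i = 0"
    and S: "(\<Sum>i\<in>UNIV. (x$i)\<^sup>2 / z$i) \<le> 1"
  shows "(\<Sum>i\<in>UNIV. \<bar>\<alpha>$i * x$i\<bar>) \<le> sqrt (\<Sum>i\<in>UNIV. (\<alpha>$i)\<^sup>2 * z$i)"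
proof -
  define f where "f i = \<alpha>$i * sqrt (z$i)" for i
  define g where "g i = x$i / sqrt (z$i)" for i
  have e: "\<bar>\<alpha>$i * x$i\<bar> = \<bar>f i\<bar> * \<bar>g i\<bar>" for i
  proof (cases "z$i = 0")
    case True then show ?thesis using A by (simp add: f_def g_def)
  next
    case False then have "sqrt (z$i) > 0" using nn[of i] by simp
    then show ?thesis by (simp add: f_def g_def abs_mult)
  qed
  have "(\<Sum>i\<in>UNIV. \<bar>\<alpha>$i * x$i\<bar>) \<le> L2_set f UNIV * L2_set g UNIV"
    unfolding e by (rule L2_set_mult_ineq)
  moreover have "L2_set f UNIV = sqrt (\<Sum>i\<in>UNIV. (\<alpha>$i)\<^sup>2 * z$i)"
    unfolding L2_set_def f_def using nn by (simp add: power_mult_distrib)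
  moreover have "L2_set g UNIV \<le> 1"
    unfolding L2_set_def g_def using nn S by (simp add: power_divide)
  moreover have "L2_set f UNIV \<ge> 0" by (simp add: L2_set_nonneg)
  ultimately show ?thesis
    using mult_left_le[of "L2_set g UNIV" "L2_set f UNIV"] by linarith
qed

lemma sub2:
  fixes x z :: "real^'n"
  assumes nn: "\<And>i. z$i \<ge> 0"
    and H: "\<And>\<alpha>. (\<Sum>i\<in>UNIV. \<bar>\<alpha>$i * x$i\<bar>) \<le> sqrt (\<Sum>i\<in>UNIV. (\<alpha>$i)\<^sup>2 * z$i)"
  shows "(\<forall>i. z$i = 0 \<longrightarrow> x$i = 0) \<and> (\<Sum>i\<in>UNIV. (x$i)\<^sup>2 / z$i) \<le> 1"
proof
  show A: "\<forall>i. z$i = 0 \<longrightarrow> x$i = 0"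
  proof (intro allI impI)
    fix i assume z0: "z$i = 0"
    have e1: "\<And>j. \<bar>(axis i 1 :: real^'n)$j * x$j\<bar> = (if j = i then \<bar>x$i\<bar> else 0)"
      by (simp add: axis_def)
    have e2: "\<And>j. ((axis i 1 :: real^'n)$j)\<^sup>2 * z$j = (if j = i then z$i else 0)"
      by (simp add: axis_def)
    have "(\<Sum>j\<in>UNIV. \<bar>(axis i 1 :: real^'n)$j * x$j\<bar>) = \<bar>x$i\<bar>"
      unfolding e1 by simp
    moreover have "(\<Sum>j\<in>UNIV. ((axis i 1 :: real^'n)$j)\<^sup>2 * z$j) = 0"
      unfolding e2 using z0 by simp
    ultimately show "x$i = 0" using H[of "axis i 1"] by simp
  qed
  define S where "S = (\<Sum>i\<in>UNIV. (x$i)\<^sup>2 / z$i)"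
  define \<alpha> where "\<alpha> = (\<chi> i. x$i / z$i)"
  have S0: "S \<ge> 0" unfolding S_def using nn by (auto intro: sum_nonneg)
  have "\<bar>\<alpha>$i * x$i\<bar> = (x$i)\<^sup>2 / z$i" for i
    using nn[of i] by (simp add: \<alpha>_def power2_eq_square abs_mult)
  then have l: "(\<Sum>i\<in>UNIV. \<bar>\<alpha>$i * x$i\<bar>) = S" by (simp add: S_def)
  have "(\<alpha>$i)\<^sup>2 * z$i = (x$i)\<^sup>2 / z$i" for i
    using A nn[of i] by (cases "z$i = 0") (auto simp: \<alpha>_def power2_eq_square)
  then have r: "(\<Sum>i\<in>UNIV. (\<alpha>$i)\<^sup>2 * z$i) = S" by (simp add: S_def)
  have "S \<le> sqrt S" using H[of \<alpha>] l r by simp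
  then have "S\<^sup>2 \<le> S" using S0
    by (metis power_mono real_sqrt_pow2)
  have "S \<le> 1"
  proof (rule ccontr)
    assume "\<not> S \<le> 1"
    then have "S * 1 < S * S" by (intro mult_strict_left_mono) auto
    then show False using \<open>S\<^sup>2 \<le> S\<close> by (simp add: power2_eq_square)
  qed
  then show "(\<Sum>i\<in>UNIV. (x$i)\<^sup>2 / z$i) \<le> 1" by (simp add: S_def)
qed

theorem proposition5:
  fixes Z :: "(real^'n) set"
  assumes "\<forall>z\<in>Z. \<forall>i. z$i \<in> {0, 1}"
  shows "C_bar Z = R_persp Z"
proof (intro set_eqI iffI)
  fix p assume p: "p \<in> C_bar Z"
  obtain x z where pe: "p = (x, z)" by force
  have Hc: "(x, z) \<in> C_alpha Z \<alpha>" for \<alpha>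
    using p unfolding pe C_bar_def by blast
  have H: "z \<in> convex hull Z \<and> (\<Sum>i\<in>UNIV. \<bar>\<alpha>$i * x$i\<bar>) \<le> sqrt (\<Sum>i\<in>UNIV. (\<alpha>$i)\<^sup>2 * z$i)" for \<alpha>
    using Hc[of \<alpha>] unfolding C_alpha_def by simp
  have zh: "z \<in> convex hull Z" using H by blast
  have nn: "\<And>i. z$i \<ge> 0" using hull_nonneg[OF assms zh] .
  have "(\<forall>i. z$i = 0 \<longrightarrow> x$i = 0) \<and> (\<Sum>i\<in>UNIV. (x$i)\<^sup>2 / z$i) \<le> 1"
    by (rule sub2[OF nn]) (use H in blast)
  then have "(\<Sum>i\<in>UNIV. pdiv ((x$i)\<^sup>2) (z$i)) \<le> 1"
    using pdiv_sum_iff[OF nn, of x] by blast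
  then show "p \<in> R_persp Z"
    unfolding pe R_persp_def using zh by simp
next
  fix p assume p: "p \<in> R_persp Z"
  obtain x z where pe: "p = (x, z)" by force
  have zh: "z \<in> convex hull Z" and s: "(\<Sum>i\<in>UNIV. pdiv ((x$i)\<^sup>2) (z$i)) \<le> 1"
    using p unfolding pe R_persp_def by auto
  have nn: "\<And>i. z$i \<ge> 0" using hull_nonneg[OF assms zh] .
  have AS: "(\<forall>i. z$i = 0 \<longrightarrow> x$i = 0) \<and> (\<Sum>i\<in>UNIV. (x$i)\<^sup>2 / z$i) \<le> 1"
    using pdiv_sum_iff[OF nn, of x] s by blast
  have "(x, z) \<in> C_alpha Z \<alpha>" for \<alpha>
    unfolding C_alpha_def using zh sub1[OF nn conjunct1[OF AS] conjunct2[OF AS], of \<alpha>] by simp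
  then show "p \<in> C_bar Z"
    unfolding pe C_bar_def by blast
qed

end
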